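(* Let $\mathcal{V}$ be a variety of algebras, $\mathcal{C}$ a full subcategory of the category of finitely generated free $\mathcal{V}$-algebras containing the free monogenic algebra $A_0$ on $x_0$, and $\Phi$ an automorphism of $\mathcal{C}$ with main function $(s^\Phi_A)$. Let $A$ be a $\mathcal{C}$-algebra and $X$ a basis of $\Phi(A)$. Then either no element of $X$ belongs to $s^\Phi_A(|A|)$, or $s^\Phi_A:|A|\to|\Phi(A)|$ is surjective.
   Context: Morphisms of $\mathcal{C}$ are all homomorphisms. For $a\in A$, $\alpha^A_a:A_0\to A$ is the homomorphism with $x_0\mapsto a$. Let $\eta^\Phi_0:\Phi^{-1}(A_0)\to A_0$ be the homomorphism sending every element of a fixed basis of $\Phi^{-1}(A_0)$ to $x_0$ (the identity if $\Phi(A_0)=A_0$), and $\eta^\Phi=\Phi(\eta^\Phi_0):A_0\to\Phi(A_0)$. The main function is $s^\Phi_A:|A|\to|\Phi(A)|$, $s^\Phi_A(a)=\Phi(\alpha^A_a)(\eta^\Phi(x_0))$. *)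

theory Defs
  imports Main "HOL-Library.FuncSet"
begin

text \<open>Algebras have carriers inside a fixed universe type 'u; operations are
  total functions on argument lists, only their values on lists of the
  correct length with entries in the carrier matter.\<close>

datatype ('f,'v) trm = Var 'v | App 'f "('f,'v) trm list"

record ('f,'u) alg =
  carrier :: "'u set"
  ops :: "'f \<Rightarrow> 'u list \<Rightarrow> 'u"

fun wf_trm :: "('f \<Rightarrow> nat) \<Rightarrow> ('f,'v) trm \<Rightarrow> bool" where
  "wf_trm ar (Var v) = True"
| "wf_trm ar (App f ts) = (length ts = ar f \<and> (\<forall>t\<in>set ts. wf_trm ar t))"

fun eval :: "('f,'u) alg \<Rightarrow> ('v \<Rightarrow> 'u) \<Rightarrow> ('f,'v) trm \<Rightarrow> 'u" where
  "eval A \<rho> (Var v) = \<rho> v"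
| "eval A \<rho> (App f ts) = ops A f (map (eval A \<rho>) ts)"

definition is_alg :: "('f \<Rightarrow> nat) \<Rightarrow> ('f,'u) alg \<Rightarrow> bool" where
  "is_alg ar A \<longleftrightarrow>
     (\<forall>f xs. length xs = ar f \<and> set xs \<subseteq> carrier A \<longrightarrow> ops A f xs \<in> carrier A)"

text \<open>A variety is given (Birkhoff) by a set E of identities between
  well-formed terms in the variables nat.\<close>
definition is_variety :: "('f \<Rightarrow> nat) \<Rightarrow> (('f,nat) trm \<times> ('f,nat) trm) set \<Rightarrow> bool" where
  "is_variety ar E \<longleftrightarrow> (\<forall>(l,r)\<in>E. wf_trm ar l \<and> wf_trm ar r)"

definition in_variety ::
  "('f \<Rightarrow> nat) \<Rightarrow> (('f,nat) trm \<times> ('f,nat) trm) set \<Rightarrow> ('f,'u) alg \<Rightarrow> bool" where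
  "in_variety ar E A \<longleftrightarrow> is_alg ar A \<and>
     (\<forall>(l,r)\<in>E. \<forall>\<rho>. (\<forall>v. \<rho> v \<in> carrier A) \<longrightarrow> eval A \<rho> l = eval A \<rho> r)"

definition hom :: "('f \<Rightarrow> nat) \<Rightarrow> ('f,'u) alg \<Rightarrow> ('f,'u) alg \<Rightarrow> ('u \<Rightarrow> 'u) \<Rightarrow> bool" where
  "hom ar A B h \<longleftrightarrow> h \<in> carrier A \<rightarrow> carrier B \<and> h \<in> extensional (carrier A) \<and>
     (\<forall>f xs. length xs = ar f \<and> set xs \<subseteq> carrier A \<longrightarrow> h (ops A f xs) = ops B f (map h xs))"

definition free_on ::
  "('f \<Rightarrow> nat) \<Rightarrow> (('f,nat) trm \<times> ('f,nat) trm) set \<Rightarrow> ('f,'u) alg \<Rightarrow> 'u set \<Rightarrow> bool" where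
  "free_on ar E A X \<longleftrightarrow> in_variety ar E A \<and> X \<subseteq> carrier A \<and>
     (\<forall>B. in_variety ar E B \<longrightarrow>
        (\<forall>g \<in> X \<rightarrow> carrier B. \<exists>!h. hom ar A B h \<and> (\<forall>x\<in>X. h x = g x)))"

definition fg_free ::
  "('f \<Rightarrow> nat) \<Rightarrow> (('f,nat) trm \<times> ('f,nat) trm) set \<Rightarrow> ('f,'u) alg \<Rightarrow> bool" where
  "fg_free ar E A \<longleftrightarrow> (\<exists>X. finite X \<and> free_on ar E A X)"

definition is_functor ::
  "('f \<Rightarrow> nat) \<Rightarrow> ('f,'u) alg set \<Rightarrow> (('f,'u) alg \<Rightarrow> ('f,'u) alg)
   \<Rightarrow> (('f,'u) alg \<Rightarrow> ('f,'u) alg \<Rightarrow> ('u \<Rightarrow> 'u) \<Rightarrow> ('u \<Rightarrow> 'u)) \<Rightarrow> bool" where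
  "is_functor ar Obj FO FM \<longleftrightarrow>
     (\<forall>A\<in>Obj. FO A \<in> Obj) \<and>
     (\<forall>A\<in>Obj. \<forall>B\<in>Obj. \<forall>h. hom ar A B h \<longrightarrow> hom ar (FO A) (FO B) (FM A B h)) \<and>
     (\<forall>A\<in>Obj. FM A A (restrict id (carrier A)) = restrict id (carrier (FO A))) \<and>
     (\<forall>A\<in>Obj. \<forall>B\<in>Obj. \<forall>C\<in>Obj. \<forall>g h. hom ar A B h \<and> hom ar B C g \<longrightarrow>
        FM A C (compose (carrier A) g h) = compose (carrier (FO A)) (FM B C g) (FM A B h))"

definition is_automorphism ::
  "('f \<Rightarrow> nat) \<Rightarrow> ('f,'u) alg set
   \<Rightarrow> (('f,'u) alg \<Rightarrow> ('f,'u) alg) \<Rightarrow> (('f,'u) alg \<Rightarrow> ('f,'u) alg \<Rightarrow> ('u \<Rightarrow> 'u) \<Rightarrow> ('u \<Rightarrow> 'u))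
   \<Rightarrow> (('f,'u) alg \<Rightarrow> ('f,'u) alg) \<Rightarrow> (('f,'u) alg \<Rightarrow> ('f,'u) alg \<Rightarrow> ('u \<Rightarrow> 'u) \<Rightarrow> ('u \<Rightarrow> 'u))
   \<Rightarrow> bool" where
  "is_automorphism ar Obj FO FM GO GM \<longleftrightarrow>
     is_functor ar Obj FO FM \<and> is_functor ar Obj GO GM \<and>
     (\<forall>A\<in>Obj. GO (FO A) = A \<and> FO (GO A) = A) \<and>
     (\<forall>A\<in>Obj. \<forall>B\<in>Obj. \<forall>h. hom ar A B h \<longrightarrow>
        GM (FO A) (FO B) (FM A B h) = h \<and> FM (GO A) (GO B) (GM A B h) = h)"

definition alpha :: "('f \<Rightarrow> nat) \<Rightarrow> ('f,'u) alg \<Rightarrow> 'u \<Rightarrow> ('f,'u) alg \<Rightarrow> 'u \<Rightarrow> ('u \<Rightarrow> 'u)" where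
  "alpha ar A0 x0 A a = (THE h. hom ar A0 A h \<and> h x0 = a)"

definition eta0 :: "('f \<Rightarrow> nat) \<Rightarrow> ('f,'u) alg \<Rightarrow> 'u \<Rightarrow> ('f,'u) alg \<Rightarrow> 'u set \<Rightarrow> ('u \<Rightarrow> 'u)" where
  "eta0 ar A0 x0 B Y = (THE h. hom ar B A0 h \<and> (\<forall>y\<in>Y. h y = x0))"

definition main_fun ::
  "('f \<Rightarrow> nat) \<Rightarrow> ('f,'u) alg \<Rightarrow> 'u
   \<Rightarrow> (('f,'u) alg \<Rightarrow> ('f,'u) alg \<Rightarrow> ('u \<Rightarrow> 'u) \<Rightarrow> ('u \<Rightarrow> 'u))
   \<Rightarrow> (('f,'u) alg \<Rightarrow> ('f,'u) alg) \<Rightarrow> 'u set \<Rightarrow> ('f,'u) alg \<Rightarrow> 'u \<Rightarrow> 'u" where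
  "main_fun ar A0 x0 FM GO Y A a =
     (let eta = FM (GO A0) A0 (eta0 ar A0 x0 (GO A0) Y)
      in FM A0 A (alpha ar A0 x0 A a) (eta x0))"

end

theory Submission
  imports Defs
begin

lemma free_ex1:
  "free_on ar E A X \<Longrightarrow> in_variety ar E B \<Longrightarrow> g \<in> X \<rightarrow> carrier B \<Longrightarrow>
   \<exists>!h. hom ar A B h \<and> (\<forall>x\<in>X. h x = g x)"
  by (simp add: free_on_def)

lemma fg_in_variety: "fg_free ar E A \<Longrightarrow> in_variety ar E A"
  by (auto simp: fg_free_def free_on_def)

lemma alpha_ex1:
  assumes "free_on ar E A0 {x0}" "in_variety ar E A" "a \<in> carrier A"
  shows "\<exists>!h. hom ar A0 A h \<and> h x0 = a"
proof -
  have "\<exists>!h. hom ar A0 A h \<and> (\<forall>x\<in>{x0}. h x = (\<lambda>_. a) x)"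
    using free_ex1[OF assms(1,2), of "\<lambda>_. a"] assms(3) by auto
  then show ?thesis by simp
qed

lemma alpha_prop:
  assumes "free_on ar E A0 {x0}" "in_variety ar E A" "a \<in> carrier A"
  shows "hom ar A0 A (alpha ar A0 x0 A a) \<and> alpha ar A0 x0 A a x0 = a"
  unfolding alpha_def using theI'[OF alpha_ex1[OF assms]] .

lemma alpha_uniq:
  assumes "free_on ar E A0 {x0}" "in_variety ar E A" "a \<in> carrier A"
    "hom ar A0 A h" "h x0 = a"
  shows "alpha ar A0 x0 A a = h"
  unfolding alpha_def using the1_equality[OF alpha_ex1[OF assms(1-3)], of h] assms(4,5) by simp

lemma hom_comp:
  assumes "is_alg ar A" "hom ar A B f" "hom ar B C g"
  shows "hom ar A C (compose (carrier A) g f)"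
proof -
  have fP: "f \<in> carrier A \<rightarrow> carrier B" and gP: "g \<in> carrier B \<rightarrow> carrier C"
    using assms by (auto simp: hom_def)
  have "compose (carrier A) g f \<in> carrier A \<rightarrow> carrier C"
    using fP gP by (auto simp: compose_def)
  moreover have "compose (carrier A) g f \<in> extensional (carrier A)"
    by (simp add: compose_def)
  moreover have "compose (carrier A) g f (ops A h xs) = ops C h (map (compose (carrier A) g f) xs)"
    if "length xs = ar h" "set xs \<subseteq> carrier A" for h xs
  proof -
    have in1: "ops A h xs \<in> carrier A" using assms(1) that by (auto simp: is_alg_def)
    have m: "map (compose (carrier A) g f) xs = map g (map f xs)"
      using that(2) by (auto simp: compose_def)
    have s2: "set (map f xs) \<subseteq> carrier B" using that(2) fP by auto
    have "compose (carrier A) g f (ops A h xs) = g (f (ops A h xs))"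
      using in1 by (simp add: compose_def)
    also have "\<dots> = g (ops B h (map f xs))" using assms(2) that by (simp add: hom_def)
    also have "\<dots> = ops C h (map g (map f xs))" using assms(3) that s2 by (simp add: hom_def)
    finally show ?thesis unfolding m .
  qed
  ultimately show ?thesis by (simp add: hom_def)
qed

theorem proposition4:
  fixes ar :: "'f \<Rightarrow> nat"
    and E :: "(('f,nat) trm \<times> ('f,nat) trm) set"
    and Obj :: "('f,'u) alg set"
    and A0 A :: "('f,'u) alg"
    and x0 :: 'u
    and FO GO :: "('f,'u) alg \<Rightarrow> ('f,'u) alg"
    and FM GM :: "('f,'u) alg \<Rightarrow> ('f,'u) alg \<Rightarrow> ('u \<Rightarrow> 'u) \<Rightarrow> ('u \<Rightarrow> 'u)"
    and Y X :: "'u set"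
  assumes variety: "is_variety ar E"
    and universe_large: "\<exists>i :: ('f,nat) trm \<Rightarrow> 'u. inj i"
    and objs: "Obj \<subseteq> {B. fg_free ar E B}"
    and A0_obj: "A0 \<in> Obj" and A0_free: "free_on ar E A0 {x0}"
    and aut: "is_automorphism ar Obj FO FM GO GM"
    and Y_basis: "free_on ar E (GO A0) Y"
    and Y_conv: "FO A0 = A0 \<longrightarrow> Y = {x0}"
    and A_obj: "A \<in> Obj"
    and X_basis: "free_on ar E (FO A) X"
  shows "X \<inter> main_fun ar A0 x0 FM GO Y A ` carrier A = {}
         \<or> main_fun ar A0 x0 FM GO Y A ` carrier A = carrier (FO A)"
proof -
  have FF: "is_functor ar Obj FO FM" and GF: "is_functor ar Obj GO GM"
    and inv: "\<forall>A\<in>Obj. GO (FO A) = A \<and> FO (GO A) = A"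
    and invM: "\<forall>A\<in>Obj. \<forall>B\<in>Obj. \<forall>h. hom ar A B h \<longrightarrow>
        GM (FO A) (FO B) (FM A B h) = h \<and> FM (GO A) (GO B) (GM A B h) = h"
    using aut by (auto simp: is_automorphism_def)
  have FO_obj: "\<And>A. A \<in> Obj \<Longrightarrow> FO A \<in> Obj" using FF by (simp add: is_functor_def)
  have GO_obj: "\<And>A. A \<in> Obj \<Longrightarrow> GO A \<in> Obj" using GF by (simp add: is_functor_def)
  have FM_hom: "\<And>A B h. A \<in> Obj \<Longrightarrow> B \<in> Obj \<Longrightarrow> hom ar A B h \<Longrightarrow> hom ar (FO A) (FO B) (FM A B h)"
    using FF by (simp add: is_functor_def)
  have GM_hom: "\<And>A B h. A \<in> Obj \<Longrightarrow> B \<in> Obj \<Longrightarrow> hom ar A B h \<Longrightarrow> hom ar (GO A) (GO B) (GM A B h)"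
    using GF by (simp add: is_functor_def)
  have FM_comp: "\<And>A B C g h. A \<in> Obj \<Longrightarrow> B \<in> Obj \<Longrightarrow> C \<in> Obj \<Longrightarrow> hom ar A B h \<Longrightarrow> hom ar B C g \<Longrightarrow>
        FM A C (compose (carrier A) g h) = compose (carrier (FO A)) (FM B C g) (FM A B h)"
  proof -
    fix A B C g h assume "A \<in> Obj" "B \<in> Obj" "C \<in> Obj" "hom ar A B h" "hom ar B C g"
    moreover have "\<forall>A\<in>Obj. \<forall>B\<in>Obj. \<forall>C\<in>Obj. \<forall>g h. hom ar A B h \<and> hom ar B C g \<longrightarrow>
        FM A C (compose (carrier A) g h) = compose (carrier (FO A)) (FM B C g) (FM A B h)"
      using FF unfolding is_functor_def by (elim conjE)
    ultimately show "FM A C (compose (carrier A) g h) = compose (carrier (FO A)) (FM B C g) (FM A B h)"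
      by simp
  qed
  have invar: "\<And>B. B \<in> Obj \<Longrightarrow> in_variety ar E B" using objs fg_in_variety by blast
  have A0_var: "in_variety ar E A0" using invar A0_obj .
  have A0_alg: "is_alg ar A0" using A0_var by (simp add: in_variety_def)
  have x0_in: "x0 \<in> carrier A0" using A0_free by (simp add: free_on_def)
  have GA0: "GO A0 \<in> Obj" using GO_obj A0_obj .
  define e0 where "e0 = eta0 ar A0 x0 (GO A0) Y"
  have e0_hom: "hom ar (GO A0) A0 e0"
  proof -
    have "\<exists>!h. hom ar (GO A0) A0 h \<and> (\<forall>y\<in>Y. h y = (\<lambda>_. x0) y)"
      using free_ex1[OF Y_basis A0_var, of "\<lambda>_. x0"] x0_in by auto
    then have "\<exists>!h. hom ar (GO A0) A0 h \<and> (\<forall>y\<in>Y. h y = x0)" by simp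
    from theI'[OF this] show ?thesis unfolding e0_def eta0_def by blast
  qed
  define e where "e = FM (GO A0) A0 e0 x0"
  have e_in: "e \<in> carrier (FO A0)"
  proof -
    have "hom ar (FO (GO A0)) (FO A0) (FM (GO A0) A0 e0)" using FM_hom[OF GA0 A0_obj e0_hom] .
    then have "hom ar A0 (FO A0) (FM (GO A0) A0 e0)" using inv A0_obj by simp
    then show ?thesis unfolding e_def using x0_in by (auto simp: hom_def)
  qed
  define s where "s = main_fun ar A0 x0 FM GO Y A"
  have s_eq: "\<And>a. s a = FM A0 A (alpha ar A0 x0 A a) e"
    unfolding s_def main_fun_def e_def e0_def by simp
  have A_var: "in_variety ar E A" using invar A_obj .
  have s_in: "\<And>a. a \<in> carrier A \<Longrightarrow> s a \<in> carrier (FO A)"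
  proof -
    fix a assume a: "a \<in> carrier A"
    have "hom ar (FO A0) (FO A) (FM A0 A (alpha ar A0 x0 A a))"
      using FM_hom[OF A0_obj A_obj] alpha_prop[OF A0_free A_var a] by blast
    then show "s a \<in> carrier (FO A)" using s_eq e_in by (auto simp: hom_def)
  qed
  have nat: "s (h a) = FM A A h (s a)" if a: "a \<in> carrier A" and h: "hom ar A A h" for a h
  proof -
    have al: "hom ar A0 A (alpha ar A0 x0 A a)" "alpha ar A0 x0 A a x0 = a"
      using alpha_prop[OF A0_free A_var a] by auto
    have ha: "h a \<in> carrier A" using h a by (auto simp: hom_def)
    have "compose (carrier A0) h (alpha ar A0 x0 A a) = alpha ar A0 x0 A (h a)"
      by (rule alpha_uniq[OF A0_free A_var ha, symmetric])
         (use hom_comp[OF A0_alg al(1) h] al(2) x0_in in \<open>auto simp: compose_def\<close>)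
    then have "FM A0 A (alpha ar A0 x0 A (h a)) = compose (carrier (FO A0)) (FM A A h) (FM A0 A (alpha ar A0 x0 A a))"
      using FM_comp[OF A0_obj A_obj A_obj al(1) h] by simp
    then show ?thesis using s_eq e_in by (simp add: compose_def)
  qed
  have FA: "FO A \<in> Obj" using FO_obj A_obj .
  have FA_var: "in_variety ar E (FO A)" using invar FA .
  have "X \<inter> s ` carrier A = {} \<or> s ` carrier A = carrier (FO A)"
  proof (cases "X \<inter> s ` carrier A = {}")
    case False
    then obtain a where a: "a \<in> carrier A" and sx: "s a \<in> X" by auto
    have "carrier (FO A) \<subseteq> s ` carrier A"
    proof
      fix b assume b: "b \<in> carrier (FO A)"
      obtain \<gamma> where g: "hom ar (FO A) (FO A) \<gamma>" and gX: "\<forall>x\<in>X. \<gamma> x = b"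
        using free_ex1[OF X_basis FA_var, of "\<lambda>_. b"] b by auto
      define h where "h = GM (FO A) (FO A) \<gamma>"
      have hh: "hom ar A A h" using GM_hom[OF FA FA g] inv A_obj unfolding h_def by simp
      have "FM (GO (FO A)) (GO (FO A)) h = \<gamma>" using invM FA g unfolding h_def by simp
      then have Fh: "FM A A h = \<gamma>" using inv A_obj by simp
      have "s (h a) = b" using nat[OF a hh] Fh gX sx by simp
      moreover have "h a \<in> carrier A" using hh a by (auto simp: hom_def)
      ultimately show "b \<in> s ` carrier A" by blast
    qed
    moreover have "s ` carrier A \<subseteq> carrier (FO A)" using s_in by auto
    ultimately have "s ` carrier A = carrier (FO A)" by (rule equalityI[rotated])
    then show ?thesis by (rule disjI2)
  qed simp
  then show ?thesis unfolding s_def .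
qed

end
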